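(* (Quantum Minimax Theorem.) For every two-player zero-sum static quantum game (as defined in the context), with $P(\chi,\xi)=\sum_{\alpha,\beta,\gamma,\delta}\chi_{\alpha\beta}\xi_{\gamma\delta}A_{\alpha\beta\gamma\delta}$ the payoff of player I, $$\max_{\chi\in\Omega_{\mathrm{I}}}\min_{\xi\in\Omega_{\mathrm{II}}}P(\chi,\xi)=\min_{\xi\in\Omega_{\mathrm{II}}}\max_{\chi\in\Omega_{\mathrm{I}}}P(\chi,\xi).$$
   Context: A two-player static quantum game: each of two players receives $q$ qubits, $n=2^q$. The referee prepares a density matrix $\rho$ on $\mathbb{C}^n\otimes\mathbb{C}^n$, sends the first $q$ qubits to player I and the last $q$ to player II; each applies a trace-preserving completely positive map to their part and returns it; the referee measures with a POVM $\{M_m\}_{m=1}^L$ and awards player $k\in\{\mathrm{I},\mathrm{II}\}$ the amount $a^k_m\in\mathbb{R}$ on outcome $m$. The game is zero-sum if $a^{\mathrm{I}}_m=-a^{\mathrm{II}}_m$ for all $m$. Let $R=\sum_m a^{\mathrm{I}}_m M_m^\dagger M_m$. Fix a basis $\{\tilde E_\alpha\}_{\alpha=1}^{4^q}$ of the $n\times n$ complex matrices. A trace-preserving completely positive map with Kraus operators $E_j=\sum_\alpha e_{j\alpha}\tilde E_\alpha$ is represented by its chi matrix $\chi_{\alpha\beta}=\sum_j e_{j\alpha}\overline{e_{j\beta}}$. The strategy sets $\Omega_{\mathrm{I}}=\Omega_{\mathrm{II}}$ are the set of all $4^q\times4^q$ positive semidefinite Hermitian matrices $\chi$ with $\sum_{\alpha,\beta}\overline{\chi_{\alpha\beta}}\tilde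 E_\alpha^\dagger\tilde E_\beta=I$. The coefficients are $A_{\alpha\beta\gamma\delta}=\mathrm{tr}\big[R(\tilde E_\alpha\otimes\tilde E_\gamma)\rho(\tilde E_\beta^\dagger\otimes\tilde E_\delta^\dagger)\big]$; then $P(\chi,\xi)$ equals $\mathrm{tr}(R\pi)$ for the final state $\pi$ when player I plays $\chi$ and player II plays $\xi$, and it is real. *)

theory Defs
  imports "HOL-Analysis.Analysis"
begin

text \<open>The one-player space C^n is indexed by a finite type 'n with CARD('n) = 2^q;
  the two-player space C^n \<otimes> C^n is indexed by 'n \<times> 'n (first component = first q qubits,
  sent to player I).\<close>

definition adj :: "complex^'m^'n \<Rightarrow> complex^'n^'m" where
  "adj M = (\<chi> i j. cnj (M $ j $ i))"

definition kron :: "complex^'n^'n \<Rightarrow> complex^'n^'n \<Rightarrow> complex^('n \<times> 'n)^('n \<times> 'n)" where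
  "kron A B = (\<chi> p r. A $ fst p $ fst r * B $ snd p $ snd r)"

definition hermitian :: "complex^'n^'n \<Rightarrow> bool" where
  "hermitian M \<longleftrightarrow> adj M = M"

definition psd :: "complex^'n^'n \<Rightarrow> bool" where
  "psd M \<longleftrightarrow> (\<forall>x :: complex^'n. (\<Sum>i\<in>UNIV. cnj (x $ i) * (M *v x) $ i) \<in> \<real> \<and>
                   0 \<le> Re (\<Sum>i\<in>UNIV. cnj (x $ i) * (M *v x) $ i))"

definition density_matrix :: "complex^'n^'n \<Rightarrow> bool" where
  "density_matrix \<rho> \<longleftrightarrow> psd \<rho> \<and> trace \<rho> = 1"

definition povm :: "('o::finite \<Rightarrow> complex^'n^'n) \<Rightarrow> bool" where
  "povm M \<longleftrightarrow> (\<Sum>m\<in>UNIV. adj (M m) ** M m) = mat 1"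

definition matrix_basis :: "('b::finite \<Rightarrow> complex^'n^'n) \<Rightarrow> bool" where
  "matrix_basis E \<longleftrightarrow>
     (\<forall>c :: 'b \<Rightarrow> complex. (\<forall>i j. (\<Sum>a\<in>UNIV. c a * E a $ i $ j) = 0) \<longrightarrow> (\<forall>a. c a = 0)) \<and>
     (\<forall>X :: complex^'n^'n. \<exists>c :: 'b \<Rightarrow> complex. \<forall>i j. X $ i $ j = (\<Sum>a\<in>UNIV. c a * E a $ i $ j))"

definition payoff_op :: "('o::finite \<Rightarrow> real) \<Rightarrow> ('o \<Rightarrow> complex^'n^'n) \<Rightarrow> complex^'n^'n" where
  "payoff_op a M = (\<Sum>m\<in>UNIV. (\<chi> i j. complex_of_real (a m) * (adj (M m) ** M m) $ i $ j))"

definition strategies :: "('b::finite \<Rightarrow> complex^'n^'n) \<Rightarrow> (complex^'b^'b) set" where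
  "strategies E = {X. psd X \<and> hermitian X \<and>
      (\<Sum>\<alpha>\<in>UNIV. \<Sum>\<beta>\<in>UNIV. (\<chi> i j. cnj (X $ \<alpha> $ \<beta>) * (adj (E \<alpha>) ** E \<beta>) $ i $ j)) = mat 1}"

definition coeffA ::
  "complex^('n \<times> 'n)^('n \<times> 'n) \<Rightarrow> complex^('n \<times> 'n)^('n \<times> 'n) \<Rightarrow> ('b::finite \<Rightarrow> complex^'n^'n)
     \<Rightarrow> 'b \<Rightarrow> 'b \<Rightarrow> 'b \<Rightarrow> 'b \<Rightarrow> complex" where
  "coeffA R \<rho> E \<alpha> \<beta> \<gamma> \<delta> =
     trace (R ** kron (E \<alpha>) (E \<gamma>) ** \<rho> ** kron (adj (E \<beta>)) (adj (E \<delta>)))"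

text \<open>P(\<chi>,\<xi>) = \<Sum> \<chi>_{\<alpha>\<beta>} \<xi>_{\<gamma>\<delta>} A_{\<alpha>\<beta>\<gamma>\<delta>} (a complex number, real on \<Omega> \<times> \<Omega>).\<close>
definition game_payoff ::
  "complex^('n \<times> 'n)^('n \<times> 'n) \<Rightarrow> complex^('n \<times> 'n)^('n \<times> 'n) \<Rightarrow> ('b::finite \<Rightarrow> complex^'n^'n)
     \<Rightarrow> complex^'b^'b \<Rightarrow> complex^'b^'b \<Rightarrow> complex" where
  "game_payoff R \<rho> E X Y =
     (\<Sum>\<alpha>\<in>UNIV. \<Sum>\<beta>\<in>UNIV. \<Sum>\<gamma>\<in>UNIV. \<Sum>\<delta>\<in>UNIV.
        X $ \<alpha> $ \<beta> * Y $ \<gamma> $ \<delta> * coeffA R \<rho> E \<alpha> \<beta> \<gamma> \<delta>)"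

end

theory Submission
  imports Defs
begin


lemma linear_repr:
  fixes f :: "'a::euclidean_space \<Rightarrow> real"
  assumes "linear f"
  shows "f x = inner x (\<Sum>b\<in>Basis. f b *\<^sub>R b)"
proof -
  have "f x = f (\<Sum>b\<in>Basis. (inner x b) *\<^sub>R b)" by (simp only: euclidean_representation)
  also have "\<dots> = (\<Sum>b\<in>Basis. (inner x b) * f b)"
    by (simp only: linear_sum[OF assms] linear_scale[OF assms] real_scaleR_def)
  also have "\<dots> = (\<Sum>b\<in>Basis. f b * (inner x b))"
    by (rule sum.cong[OF refl]) (rule mult.commute)
  also have "\<dots> = inner x (\<Sum>b\<in>Basis. f b *\<^sub>R b)"
    by (simp only: inner_sum_right inner_scaleR_right)
  finally show ?thesis .
qed

lemma saddle_point:
  fixes K :: "'a::euclidean_space set" and P :: "'a \<Rightarrow> 'a \<Rightarrow> real"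
  assumes K: "compact K" "convex K" "K \<noteq> {}"
    and l1: "\<And>y. linear (\<lambda>x. P x y)" and l2: "\<And>x. linear (\<lambda>y. P x y)"
  shows "\<exists>x0\<in>K. \<exists>y0\<in>K. (\<forall>x\<in>K. P x y0 \<le> P x0 y0) \<and> (\<forall>y\<in>K. P x0 y0 \<le> P x0 y)"
proof -
  define G where "G y = (\<Sum>b\<in>Basis. P b y *\<^sub>R b)" for y
  define H where "H x = (\<Sum>b\<in>Basis. P x b *\<^sub>R b)" for x
  have PG: "P x y = inner x (G y)" for x y unfolding G_def by (rule linear_repr[OF l1])
  have PH: "P x y = inner y (H x)" for x y unfolding H_def by (rule linear_repr[OF l2])
  have cP1: "continuous_on UNIV (\<lambda>x. P x y)" for y
    using l1 linear_conv_bounded_linear linear_continuous_on by blast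
  have cP2: "continuous_on UNIV (\<lambda>y. P x y)" for x
    using l2 linear_conv_bounded_linear linear_continuous_on by blast
  have cG: "continuous_on UNIV G" unfolding G_def
    by (intro continuous_on_sum continuous_on_scaleR cP2 continuous_on_const)
  have cH: "continuous_on UNIV H" unfolding H_def
    by (intro continuous_on_sum continuous_on_scaleR cP1 continuous_on_const)
  have cl: "closed K" using K compact_imp_closed by auto
  define F where "F z = (closest_point K (fst z + G (snd z)), closest_point K (snd z - H (fst z)))" for z
  have cpc: "continuous_on UNIV (closest_point K)"
    using continuous_on_closest_point[OF K(2) cl K(3)] .
  have cGs: "continuous_on UNIV (\<lambda>z::'a\<times>'a. G (snd z))"
    by (rule continuous_on_compose2[OF cG continuous_on_snd[OF continuous_on_id]]) simp
  have cHf: "continuous_on UNIV (\<lambda>z::'a\<times>'a. H (fst z))"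
    by (rule continuous_on_compose2[OF cH continuous_on_fst[OF continuous_on_id]]) simp
  have c1: "continuous_on UNIV (\<lambda>z::'a\<times>'a. fst z + G (snd z))"
    by (rule continuous_on_add[OF continuous_on_fst[OF continuous_on_id] cGs])
  have c2: "continuous_on UNIV (\<lambda>z::'a\<times>'a. snd z - H (fst z))"
    by (rule continuous_on_diff[OF continuous_on_snd[OF continuous_on_id] cHf])
  have d1: "continuous_on (K \<times> K) (\<lambda>z. closest_point K (fst z + G (snd z)))"
    by (rule continuous_on_compose2[OF cpc continuous_on_subset[OF c1 subset_UNIV]]) simp
  have d2: "continuous_on (K \<times> K) (\<lambda>z. closest_point K (snd z - H (fst z)))"
    by (rule continuous_on_compose2[OF cpc continuous_on_subset[OF c2 subset_UNIV]]) simp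
  have cF: "continuous_on (K \<times> K) F" unfolding F_def
    by (rule continuous_on_Pair[OF d1 d2])
  have Fim: "F \<in> K \<times> K \<rightarrow> K \<times> K" unfolding F_def
    using closest_point_in_set[OF cl K(3)] by auto
  obtain z where z: "z \<in> K \<times> K" "F z = z"
    using brouwer[OF compact_Times[OF K(1) K(1)] convex_Times[OF K(2) K(2)] _ cF Fim] K(3) by auto
  obtain x0 y0 where xy: "z = (x0, y0)" by (cases z)
  have x0: "closest_point K (x0 + G y0) = x0" and y0: "closest_point K (y0 - H x0) = y0"
    using z(2) unfolding F_def xy by auto
  have A: "P x y0 \<le> P x0 y0" if "x \<in> K" for x
  proof -
    have "inner ((x0 + G y0) - x0) (x - x0) \<le> 0"
      using closest_point_dot[OF K(2) cl that, of "x0 + G y0"] x0 by simp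
    then show ?thesis unfolding PG by (simp add: inner_diff_right inner_commute)
  qed
  have B: "P x0 y0 \<le> P x0 y" if "y \<in> K" for y
  proof -
    have "inner ((y0 - H x0) - y0) (y - y0) \<le> 0"
      using closest_point_dot[OF K(2) cl that, of "y0 - H x0"] y0 by simp
    then show ?thesis unfolding PH by (simp add: inner_diff_right inner_commute)
  qed
  show ?thesis using A B z(1) xy by auto
qed



definition qf :: "complex^'b^'b \<Rightarrow> complex^'b \<Rightarrow> complex^'b \<Rightarrow> complex" where
  "qf X v w = (\<Sum>a\<in>UNIV. cnj (v$a) * (X *v w)$a)"

definition Cmap :: "('b::finite \<Rightarrow> complex^'n^'n) \<Rightarrow> complex^'b^'b \<Rightarrow> complex^'n^'n" where
  "Cmap E X = (\<Sum>\<alpha>\<in>UNIV. \<Sum>\<beta>\<in>UNIV. (\<chi> i j. cnj (X $ \<alpha> $ \<beta>) * (adj (E \<alpha>) ** E \<beta>) $ i $ j))"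

lemma sc_c: "r *\<^sub>R (z::complex) = complex_of_real r * z"
  by (simp add: scaleR_conv_of_real)

lemma sc_mat: "(r *\<^sub>R (X::complex^'m^'n)) $ i $ j = complex_of_real r * X $ i $ j"
  by (simp add: sc_c)
lemma sc_vec: "(r *\<^sub>R (X::complex^'n)) $ i = complex_of_real r * X $ i"
  by (simp add: sc_c)
definition Sc :: "complex set" where "Sc = {z. z \<in> \<real> \<and> 0 \<le> Re z}"

lemma strategies_eq: "strategies E = (\<Inter>x. (\<lambda>X. qf X x x) -` Sc) \<inter> {X. adj X = X} \<inter> Cmap E -` {mat 1}"
  unfolding strategies_def psd_def hermitian_def qf_def Cmap_def Sc_def by auto

lemma linear_qf: "linear (\<lambda>X. qf X v w)"
  by (rule linearI) (simp_all add: qf_def matrix_vector_mult_def sum.distrib algebra_simps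
      sum_distrib_left sc_mat sc_vec sc_c del: vector_scaleR_component)

lemma linear_adj: "linear (adj :: complex^'m^'n \<Rightarrow> _)"
  by (rule linearI) (simp_all add: adj_def vec_eq_iff sc_mat del: vector_scaleR_component)

lemma linear_Cmap: "linear (Cmap E)"
  by (rule linearI) (simp_all add: Cmap_def vec_eq_iff sum.distrib algebra_simps
      sum_distrib_left sc_mat sc_vec sc_c del: vector_scaleR_component)

lemma convex_Sc: "convex Sc"
  unfolding Sc_def convex_def by (auto simp: scaleR_conv_of_real)

lemma closed_Sc: "closed Sc"
proof -
  have "Sc = \<real> \<inter> {z. 0 \<le> Re z}" unfolding Sc_def by auto
  then show ?thesis using closed_complex_Reals closed_halfspace_Re_ge
    by (metis closed_Int)
qed

lemma cont_lin: "linear f \<Longrightarrow> continuous_on UNIV (f :: 'a::euclidean_space \<Rightarrow> 'c::real_normed_vector)"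
  using linear_conv_bounded_linear linear_continuous_on by blast

lemma convex_strategies:
  fixes E :: "'b::finite \<Rightarrow> complex^'n::finite^'n"
  shows "convex (strategies E)"
proof -
  have "convex (\<Inter>x. (\<lambda>X::complex^'b^'b. qf X x x) -` Sc)"
    by (intro convex_INT ballI convex_linear_vimage linear_qf convex_Sc)
  moreover have "convex {X::complex^'b^'b. adj X = X}"
  proof -
    have eq: "{X::complex^'b^'b. adj X = X} = (\<lambda>X. adj X - X) -` {0}" by auto
    have lin: "linear (\<lambda>X::complex^'b^'b. adj X - X)"
      by (intro linear_compose_sub linear_adj linear_ident)
    show ?thesis unfolding eq by (rule convex_linear_vimage[OF lin convex_singleton])
  qed
  moreover have "convex (Cmap E -` {mat 1})"
    by (intro convex_linear_vimage linear_Cmap convex_singleton)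
  ultimately show ?thesis unfolding strategies_eq by (intro convex_Int)
qed

lemma closed_strategies:
  fixes E :: "'b::finite \<Rightarrow> complex^'n::finite^'n"
  shows "closed (strategies E)"
proof -
  have "closed (\<Inter>x. (\<lambda>X::complex^'b^'b. qf X x x) -` Sc)"
    by (intro closed_INT ballI closed_vimage cont_lin linear_qf closed_Sc)
  moreover have "closed {X::complex^'b^'b. adj X = X}"
    by (rule closed_Collect_eq[OF cont_lin[OF linear_adj] continuous_on_id])
  moreover have "closed (Cmap E -` {mat 1})"
    by (intro closed_vimage cont_lin linear_Cmap closed_singleton)
  ultimately show ?thesis unfolding strategies_eq by (intro closed_Int)
qed




lemma sum_pair: "(\<Sum>m\<in>(UNIV::('i::finite\<times>'j::finite) set). f m) = (\<Sum>i\<in>UNIV. \<Sum>j\<in>UNIV. f (i,j))"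
  by (simp add: sum.cartesian_product flip: UNIV_Times_UNIV)

lemma mm_comp: "((A::complex^'m^'n) ** B) $ i $ j = (\<Sum>k\<in>UNIV. A $ i $ k * B $ k $ j)"
  by (simp add: matrix_matrix_mult_def)

lemma adj_comp: "adj A $ i $ j = cnj (A $ j $ i)"
  by (simp add: adj_def)

lemma qf_expand:
  "qf X (\<chi> a. v$a + c * w$a) (\<chi> a. v$a + c * w$a) =
   qf X v v + c * qf X v w + cnj c * qf X w v + c * cnj c * qf X w w"
  by (simp add: qf_def matrix_vector_mult_def algebra_simps sum.distrib sum_distrib_left)

lemma qf_herm: assumes "adj X = X" shows "qf X w v = cnj (qf X v w)"
proof -
  have h: "cnj (X $ a $ b) = X $ b $ a" for a b
  proof -
    have "adj X $ b $ a = X $ b $ a" using assms by simp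
    then show ?thesis by (simp add: adj_comp)
  qed
  have "cnj (qf X v w) = (\<Sum>a\<in>UNIV. \<Sum>b\<in>UNIV. v $ a * (X $ b $ a) * cnj (w $ b))"
    by (simp add: qf_def matrix_vector_mult_def sum_distrib_left h algebra_simps)
  also have "\<dots> = (\<Sum>b\<in>UNIV. \<Sum>a\<in>UNIV. v $ a * (X $ b $ a) * cnj (w $ b))"
    by (rule sum.swap)
  also have "\<dots> = qf X w v"
    by (simp add: qf_def matrix_vector_mult_def sum_distrib_left algebra_simps)
  finally show ?thesis by simp
qed

lemma qf_bound:
  assumes "X \<in> strategies E"
  shows "cmod (qf X v w) \<le> (Re (qf X v v) + Re (qf X w w)) / 2"
proof (cases "qf X v w = 0")
  case True
  have "0 \<le> Re (qf X v v)" "0 \<le> Re (qf X w w)" using assms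
    unfolding strategies_eq Sc_def by auto
  then show ?thesis using True by simp
next
  case False
  define \<beta> where "\<beta> = qf X v w"
  define s where "s = - cnj \<beta> / of_real (cmod \<beta>)"
  have herm: "adj X = X" using assms unfolding strategies_eq by auto
  have cn: "complex_of_real (cmod \<beta>) \<noteq> 0" using False unfolding \<beta>_def by simp
  have nb: "\<beta> * cnj \<beta> = of_real (cmod \<beta>) * of_real (cmod \<beta>)"
    by (simp only: complex_norm_square[symmetric] power2_eq_square of_real_mult)
  have ss: "s * cnj s = 1"
  proof -
    have "s * cnj s = (\<beta> * cnj \<beta>) / (of_real (cmod \<beta>) * of_real (cmod \<beta>))"
      unfolding s_def by (simp add: field_simps)
    then show ?thesis using nb cn by simp
  qed
  have sb: "s * \<beta> = - of_real (cmod \<beta>)"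
  proof -
    have "s * \<beta> = - (\<beta> * cnj \<beta>) / of_real (cmod \<beta>)"
      unfolding s_def by (simp add: field_simps)
    also have "\<dots> = - of_real (cmod \<beta>)" using cn unfolding nb by simp
    finally show ?thesis .
  qed
  have "0 \<le> Re (qf X (\<chi> a. v$a + s * w$a) (\<chi> a. v$a + s * w$a))"
    using assms unfolding strategies_eq Sc_def by auto
  also have "\<dots> = Re (qf X v v) + Re (s * \<beta> + cnj (s * \<beta>)) + Re (qf X w w)"
    unfolding qf_expand qf_herm[OF herm, of w v] ss \<beta>_def by simp
  also have "\<dots> = Re (qf X v v) - 2 * cmod \<beta> + Re (qf X w w)"
    unfolding sb by simp
  finally show ?thesis unfolding \<beta>_def by simp
qed




definition uvec :: "('b::finite \<Rightarrow> complex^'n^'n) \<Rightarrow> 'n \<times> 'n \<Rightarrow> complex^'b" where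
  "uvec E m = (\<chi> a. cnj (E a $ fst m $ snd m))"

lemma qf_uvec: "qf X (uvec E m) (uvec E m') =
   (\<Sum>\<alpha>\<in>UNIV. \<Sum>\<beta>\<in>UNIV. E \<alpha> $ fst m $ snd m * X $ \<alpha> $ \<beta> * cnj (E \<beta> $ fst m' $ snd m'))"
  by (simp add: qf_def uvec_def matrix_vector_mult_def sum_distrib_left algebra_simps)

lemma trace_id:
  fixes E :: "'b::finite \<Rightarrow> complex^'n::finite^'n"
  assumes "X \<in> strategies E"
  shows "(\<Sum>m\<in>UNIV. qf X (uvec E m) (uvec E m)) = of_nat CARD('n)"
proof -
  have C: "Cmap E X = mat 1" using assms unfolding strategies_eq by auto
  have "(\<Sum>i\<in>(UNIV::'n set). Cmap E X $ i $ i) = (\<Sum>i\<in>(UNIV::'n set). 1)"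
    unfolding C by (simp add: mat_def)
  then have e0: "cnj (\<Sum>i\<in>(UNIV::'n set). Cmap E X $ i $ i) = of_nat CARD('n)" by simp
  have e1: "cnj (\<Sum>i\<in>(UNIV::'n set). Cmap E X $ i $ i) =
     (\<Sum>i\<in>UNIV. \<Sum>\<alpha>\<in>UNIV. \<Sum>\<beta>\<in>UNIV. \<Sum>k\<in>UNIV. X $ \<alpha> $ \<beta> * E \<alpha> $ k $ i * cnj (E \<beta> $ k $ i))"
    by (simp only: Cmap_def sum_component vec_lambda_beta mm_comp adj_comp cnj_sum complex_cnj_mult
        complex_cnj_cnj sum_distrib_left mult.assoc)
  have e2: "(\<Sum>m\<in>UNIV. qf X (uvec E m) (uvec E m)) =
     (\<Sum>k\<in>UNIV. \<Sum>i\<in>UNIV. \<Sum>\<alpha>\<in>UNIV. \<Sum>\<beta>\<in>UNIV. X $ \<alpha> $ \<beta> * E \<alpha> $ k $ i * cnj (E \<beta> $ k $ i))"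
    by (simp only: qf_uvec sum_pair fst_conv snd_conv) (simp add: mult_ac)
  have e3: "(\<Sum>k\<in>UNIV. \<Sum>i\<in>UNIV. \<Sum>\<alpha>\<in>UNIV. \<Sum>\<beta>\<in>UNIV. X $ \<alpha> $ \<beta> * E \<alpha> $ k $ i * cnj (E \<beta> $ k $ i))
     = (\<Sum>i\<in>UNIV. \<Sum>\<alpha>\<in>UNIV. \<Sum>\<beta>\<in>UNIV. \<Sum>k\<in>UNIV. X $ \<alpha> $ \<beta> * E \<alpha> $ k $ i * cnj (E \<beta> $ k $ i))"
  proof -
    have "(\<Sum>k\<in>UNIV. \<Sum>i\<in>UNIV. \<Sum>\<alpha>\<in>UNIV. \<Sum>\<beta>\<in>UNIV. X $ \<alpha> $ \<beta> * E \<alpha> $ k $ i * cnj (E \<beta> $ k $ i))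
      = (\<Sum>i\<in>UNIV. \<Sum>k\<in>UNIV. \<Sum>\<alpha>\<in>UNIV. \<Sum>\<beta>\<in>UNIV. X $ \<alpha> $ \<beta> * E \<alpha> $ k $ i * cnj (E \<beta> $ k $ i))"
      by (rule sum.swap)
    also have "\<dots> = (\<Sum>i\<in>UNIV. \<Sum>\<alpha>\<in>UNIV. \<Sum>k\<in>UNIV. \<Sum>\<beta>\<in>UNIV. X $ \<alpha> $ \<beta> * E \<alpha> $ k $ i * cnj (E \<beta> $ k $ i))"
      by (rule sum.cong[OF refl], rule sum.swap)
    also have "\<dots> = (\<Sum>i\<in>UNIV. \<Sum>\<alpha>\<in>UNIV. \<Sum>\<beta>\<in>UNIV. \<Sum>k\<in>UNIV. X $ \<alpha> $ \<beta> * E \<alpha> $ k $ i * cnj (E \<beta> $ k $ i))"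
      by (rule sum.cong[OF refl], rule sum.cong[OF refl], rule sum.swap)
    finally show ?thesis .
  qed
  show ?thesis unfolding e2 e3 e1[symmetric] e0 ..
qed

lemma qf_uvec_le:
  fixes E :: "'b::finite \<Rightarrow> complex^'n::finite^'n"
  assumes "X \<in> strategies E"
  shows "Re (qf X (uvec E m) (uvec E m)) \<le> real CARD('n)"
proof -
  have nn: "0 \<le> Re (qf X (uvec E m') (uvec E m'))" for m'
    using assms unfolding strategies_eq Sc_def by auto
  have "Re (qf X (uvec E m) (uvec E m)) \<le> (\<Sum>m'\<in>UNIV. Re (qf X (uvec E m') (uvec E m')))"
    by (rule member_le_sum) (auto simp: nn)
  also have "\<dots> = Re (\<Sum>m'\<in>UNIV. qf X (uvec E m') (uvec E m'))" by simp
  also have "\<dots> = real CARD('n)" using trace_id[OF assms] by simp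
  finally show ?thesis .
qed

lemma avg_le: "(c::real) \<le> (a+b)/2 \<Longrightarrow> a \<le> N \<Longrightarrow> b \<le> N \<Longrightarrow> c \<le> N"
  by (simp add: field_simps)

lemma qf_uvec_bound:
  fixes E :: "'b::finite \<Rightarrow> complex^'n::finite^'n"
  assumes "X \<in> strategies E"
  shows "cmod (qf X (uvec E m) (uvec E m')) \<le> real CARD('n)"
proof -
  have a: "cmod (qf X (uvec E m) (uvec E m')) \<le> (Re (qf X (uvec E m) (uvec E m)) + Re (qf X (uvec E m') (uvec E m'))) / 2"
    by (rule qf_bound[OF assms])
  have b: "Re (qf X (uvec E m) (uvec E m)) \<le> real CARD('n)" by (rule qf_uvec_le[OF assms])
  have c: "Re (qf X (uvec E m') (uvec E m')) \<le> real CARD('n)" by (rule qf_uvec_le[OF assms])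
  show ?thesis using avg_le[OF a b c] .
qed




lemma sum_delta_mult: "(\<Sum>m\<in>(UNIV::'i::finite set). f m * (if k = m then 1 else (0::complex))) = f k"
  by (simp add: if_distrib[where f="\<lambda>x. f _ * x"] cong: if_cong)

lemma dual_coef:
  fixes E :: "'b::finite \<Rightarrow> complex^'n::finite^'n"
  assumes "matrix_basis E"
  shows "\<exists>d. \<forall>a a'. (\<Sum>m\<in>UNIV. d a m * E a' $ fst m $ snd m) = (if a = a' then 1 else 0)"
proof -
  have indep: "\<And>c. (\<forall>i j. (\<Sum>a\<in>UNIV. c a * E a $ i $ j) = 0) \<Longrightarrow> (\<forall>a. c a = 0)"
    and span: "\<forall>X :: complex^'n^'n. \<exists>c. \<forall>i j. X $ i $ j = (\<Sum>a\<in>UNIV. c a * E a $ i $ j)"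
    using assms unfolding matrix_basis_def by auto
  obtain coef where coef: "\<And>X i j. X $ i $ j = (\<Sum>a\<in>UNIV. coef X a * E a $ i $ j)"
    using span by metis
  define U :: "'n \<times> 'n \<Rightarrow> complex^'n^'n" where "U m = (\<chi> i j. if (i,j) = m then 1 else 0)" for m
  define d where "d a m = coef (U m) a" for a m
  have "(\<Sum>m\<in>UNIV. d a m * E a' $ fst m $ snd m) = (if a = a' then 1 else 0)" for a a'
  proof -
    define c where "c b = (\<Sum>m\<in>UNIV. E a' $ fst m $ snd m * d b m) - (if b = a' then 1 else 0)" for b
    have "(\<Sum>b\<in>UNIV. c b * E b $ i $ j) = 0" for i j
    proof -
      have s0: "(\<Sum>b\<in>UNIV. c b * E b $ i $ j) =
         (\<Sum>b\<in>UNIV. (\<Sum>m\<in>UNIV. E a' $ fst m $ snd m * d b m) * E b $ i $ j)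
         - (\<Sum>b\<in>UNIV. (if b = a' then 1 else 0) * E b $ i $ j)"
        unfolding c_def by (simp only: left_diff_distrib sum_subtractf)
      have "(\<Sum>b\<in>UNIV. (\<Sum>m\<in>UNIV. E a' $ fst m $ snd m * d b m) * E b $ i $ j)
          = (\<Sum>b\<in>UNIV. \<Sum>m\<in>UNIV. E a' $ fst m $ snd m * (coef (U m) b * E b $ i $ j))"
        unfolding d_def by (simp only: sum_distrib_right mult.assoc)
      also have "\<dots> = (\<Sum>m\<in>UNIV. \<Sum>b\<in>UNIV. E a' $ fst m $ snd m * (coef (U m) b * E b $ i $ j))"
        by (rule sum.swap)
      also have "\<dots> = (\<Sum>m\<in>UNIV. E a' $ fst m $ snd m * (\<Sum>b\<in>UNIV. coef (U m) b * E b $ i $ j))"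
        by (simp only: sum_distrib_left)
      also have "\<dots> = (\<Sum>m\<in>UNIV. E a' $ fst m $ snd m * U m $ i $ j)"
        by (simp only: coef[symmetric])
      also have "\<dots> = (\<Sum>m\<in>UNIV. E a' $ fst m $ snd m * (if (i,j) = m then 1 else 0))"
        unfolding U_def by simp
      also have "\<dots> = E a' $ i $ j"
        by (rule sum_delta_mult[of "\<lambda>m. E a' $ fst m $ snd m" "(i,j)", simplified])
      finally have s1: "(\<Sum>b\<in>UNIV. (\<Sum>m\<in>UNIV. E a' $ fst m $ snd m * d b m) * E b $ i $ j) = E a' $ i $ j" .
      have s2: "(\<Sum>b\<in>UNIV. (if b = a' then 1 else 0) * E b $ i $ j) = E a' $ i $ j"
        using sum_delta_mult[of "\<lambda>b. E b $ i $ j" a'] by (simp add: mult.commute eq_commute)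
      show ?thesis using s0 s1 s2 by simp
    qed
    then have "c a = 0" using indep by blast
    then show ?thesis unfolding c_def by (simp add: mult.commute)
  qed
  then show ?thesis by blast
qed


lemma ite1: "(if P then 1 else 0) * (x::complex) = (if P then x else 0)" by simp
lemma cnj_ite: "cnj (if P then 1 else 0) = (if P then 1 else (0::complex))" by simp
lemma ite2: "x * (if P then 1 else 0) = (if P then x else (0::complex))" by simp

lemma swap4: "(\<Sum>a\<in>A. \<Sum>b\<in>B. \<Sum>c\<in>C. \<Sum>d\<in>D. f a b c d) = (\<Sum>c\<in>C. \<Sum>d\<in>D. \<Sum>a\<in>A. \<Sum>b\<in>B. f a b c d)"
proof -
  have "(\<Sum>a\<in>A. \<Sum>b\<in>B. \<Sum>c\<in>C. \<Sum>d\<in>D. f a b c d) = (\<Sum>a\<in>A. \<Sum>c\<in>C. \<Sum>b\<in>B. \<Sum>d\<in>D. f a b c d)"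
    by (rule sum.cong[OF refl], rule sum.swap)
  also have "\<dots> = (\<Sum>a\<in>A. \<Sum>c\<in>C. \<Sum>d\<in>D. \<Sum>b\<in>B. f a b c d)"
    by (rule sum.cong[OF refl], rule sum.cong[OF refl], rule sum.swap)
  also have "\<dots> = (\<Sum>c\<in>C. \<Sum>a\<in>A. \<Sum>d\<in>D. \<Sum>b\<in>B. f a b c d)"
    by (rule sum.swap)
  also have "\<dots> = (\<Sum>c\<in>C. \<Sum>d\<in>D. \<Sum>a\<in>A. \<Sum>b\<in>B. f a b c d)"
    by (rule sum.cong[OF refl], rule sum.swap)
  finally show ?thesis .
qed

lemma swap3: "(\<Sum>a\<in>A. \<Sum>b\<in>B. \<Sum>c\<in>C. f a b c) = (\<Sum>c\<in>C. \<Sum>a\<in>A. \<Sum>b\<in>B. f a b c)"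
proof -
  have "(\<Sum>a\<in>A. \<Sum>b\<in>B. \<Sum>c\<in>C. f a b c) = (\<Sum>a\<in>A. \<Sum>c\<in>C. \<Sum>b\<in>B. f a b c)"
    by (rule sum.cong[OF refl], rule sum.swap)
  also have "\<dots> = (\<Sum>c\<in>C. \<Sum>a\<in>A. \<Sum>b\<in>B. f a b c)"
    by (rule sum.swap)
  finally show ?thesis .
qed

lemma entry_formula:
  fixes E :: "'b::finite \<Rightarrow> complex^'n::finite^'n" and d :: "'b \<Rightarrow> 'n \<times> 'n \<Rightarrow> complex"
  assumes d: "\<forall>a a'. (\<Sum>m\<in>UNIV. d a m * E a' $ fst m $ snd m) = (if a = a' then 1 else 0)"
  shows "X $ a $ b = (\<Sum>m\<in>UNIV. \<Sum>m'\<in>UNIV. d a m * cnj (d b m') * qf X (uvec E m) (uvec E m'))"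
proof -
  have "(\<Sum>m\<in>UNIV. \<Sum>m'\<in>UNIV. d a m * cnj (d b m') * qf X (uvec E m) (uvec E m'))
    = (\<Sum>m\<in>UNIV. \<Sum>m'\<in>UNIV. \<Sum>\<alpha>\<in>UNIV. \<Sum>\<beta>\<in>UNIV.
         (d a m * E \<alpha> $ fst m $ snd m) * X $ \<alpha> $ \<beta> * (cnj (d b m') * cnj (E \<beta> $ fst m' $ snd m')))"
    unfolding qf_uvec by (simp only: sum_distrib_left) (simp add: ac_simps)
  also have "\<dots> = (\<Sum>\<alpha>\<in>UNIV. \<Sum>\<beta>\<in>UNIV. \<Sum>m\<in>UNIV. \<Sum>m'\<in>UNIV.
         (d a m * E \<alpha> $ fst m $ snd m) * X $ \<alpha> $ \<beta> * (cnj (d b m') * cnj (E \<beta> $ fst m' $ snd m')))"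
    by (rule swap4)
  also have "\<dots> = (\<Sum>\<alpha>\<in>UNIV. \<Sum>\<beta>\<in>UNIV. (\<Sum>m\<in>UNIV. d a m * E \<alpha> $ fst m $ snd m) * X $ \<alpha> $ \<beta>
         * cnj (\<Sum>m'\<in>UNIV. d b m' * E \<beta> $ fst m' $ snd m'))"
    by (simp only: sum_distrib_left sum_distrib_right cnj_sum complex_cnj_mult)
       (rule sum.cong[OF refl], rule sum.cong[OF refl], rule sum.swap)
  also have "\<dots> = (\<Sum>\<alpha>\<in>UNIV. \<Sum>\<beta>\<in>UNIV. (if a = \<alpha> then 1 else 0) * X $ \<alpha> $ \<beta> * (if b = \<beta> then 1 else 0))"
    using d by (simp add: cnj_ite)
  also have "\<dots> = X $ a $ b"
    by (simp add: ite1 ite2)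
  finally show ?thesis by simp
qed

lemma bounded_strategies:
  fixes E :: "'b::finite \<Rightarrow> complex^'n::finite^'n"
  assumes "matrix_basis E" shows "bounded (strategies E)"
proof -
  obtain d where d: "\<forall>a a'. (\<Sum>m\<in>UNIV. d a m * E a' $ fst m $ snd m) = (if a = a' then 1 else 0)"
    using dual_coef[OF assms] by blast
  define K where "K a b = (\<Sum>m\<in>UNIV. \<Sum>m'\<in>UNIV. cmod (d a m) * cmod (d b m') * real CARD('n))" for a b
  have ent: "cmod (X $ a $ b) \<le> K a b" if X: "X \<in> strategies E" for X a b
  proof -
    have "cmod (X $ a $ b) = cmod (\<Sum>m\<in>UNIV. \<Sum>m'\<in>UNIV. d a m * cnj (d b m') * qf X (uvec E m) (uvec E m'))"
      using entry_formula[OF d] by metis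
    also have "\<dots> \<le> (\<Sum>m\<in>UNIV. \<Sum>m'\<in>UNIV. cmod (d a m * cnj (d b m') * qf X (uvec E m) (uvec E m')))"
      by (intro order_trans[OF norm_sum] sum_mono norm_sum)
    also have "\<dots> \<le> K a b" unfolding K_def
      by (intro sum_mono) (simp add: norm_mult mult_left_mono qf_uvec_bound[OF X])
    finally show ?thesis .
  qed
  have "norm X \<le> (\<Sum>a\<in>UNIV. \<Sum>b\<in>UNIV. K a b)" if X: "X \<in> strategies E" for X
  proof -
    have "norm X \<le> (\<Sum>a\<in>UNIV. norm (X$a))" by (simp add: norm_vec_def L2_set_le_sum)
    also have "\<dots> \<le> (\<Sum>a\<in>UNIV. \<Sum>b\<in>UNIV. norm (X$a$b))"
      by (intro sum_mono) (simp add: norm_vec_def L2_set_le_sum)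
    also have "\<dots> \<le> (\<Sum>a\<in>UNIV. \<Sum>b\<in>UNIV. K a b)" using ent[OF X] by (intro sum_mono) auto
    finally show ?thesis .
  qed
  then show ?thesis unfolding bounded_iff by blast
qed

lemma strategies_nonempty:
  fixes E :: "'b::finite \<Rightarrow> complex^'n::finite^'n"
  assumes "matrix_basis E" shows "strategies E \<noteq> {}"
proof -
  obtain c where c: "\<forall>i j. (mat 1 :: complex^'n^'n) $ i $ j = (\<Sum>a\<in>UNIV. c a * E a $ i $ j)"
    using assms unfolding matrix_basis_def by blast
  define X :: "complex^'b^'b" where "X = (\<chi> a b. c a * cnj (c b))"
  have q: "qf X x x \<in> Sc" for x
  proof -
    define s where "s = (\<Sum>a\<in>UNIV. cnj (x$a) * c a)"
    have "qf X x x = s * cnj s" unfolding qf_def X_def s_def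
      by (simp add: matrix_vector_mult_def sum_distrib_left sum_distrib_right cnj_sum algebra_simps)
        (rule sum.swap)
    then have "qf X x x = of_real ((cmod s)^2)" by (simp only: complex_norm_square)
    then show ?thesis unfolding Sc_def by simp
  qed
  have h: "adj X = X" by (simp add: X_def adj_def vec_eq_iff mult.commute)
  have C: "Cmap E X = mat 1"
  proof -
    have "Cmap E X $ i $ j = mat 1 $ i $ j" for i j
    proof -
      have "Cmap E X $ i $ j = (\<Sum>\<alpha>\<in>UNIV. \<Sum>\<beta>\<in>UNIV. \<Sum>k\<in>UNIV.
              cnj (c \<alpha> * E \<alpha> $ k $ i) * (c \<beta> * E \<beta> $ k $ j))"
        unfolding Cmap_def X_def by (simp add: mm_comp adj_comp sum_distrib_left ac_simps)
      also have "\<dots> = (\<Sum>k\<in>UNIV. \<Sum>\<alpha>\<in>UNIV. \<Sum>\<beta>\<in>UNIV.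
              cnj (c \<alpha> * E \<alpha> $ k $ i) * (c \<beta> * E \<beta> $ k $ j))"
        by (rule swap3)
      also have "\<dots> = (\<Sum>k\<in>UNIV. cnj (\<Sum>\<alpha>\<in>UNIV. c \<alpha> * E \<alpha> $ k $ i) * (\<Sum>\<beta>\<in>UNIV. c \<beta> * E \<beta> $ k $ j))"
        by (simp only: sum_distrib_left sum_distrib_right cnj_sum)
          (rule sum.cong[OF refl], rule sum.swap)
      also have "\<dots> = (\<Sum>k\<in>UNIV. cnj ((mat 1 :: complex^'n^'n) $ k $ i) * (mat 1 :: complex^'n^'n) $ k $ j)"
        by (simp only: c[rule_format, symmetric])
      also have "\<dots> = mat 1 $ i $ j"
        unfolding mat_def by (simp only: vec_lambda_beta cnj_ite ite1 sum.delta finite UNIV_I if_True)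
      finally show ?thesis .
    qed
    then show ?thesis by (simp add: vec_eq_iff)
  qed
  have "X \<in> strategies E" unfolding strategies_eq using q h C by auto
  then show ?thesis by blast
qed

lemma lin_gp1: "linear (\<lambda>x. game_payoff R \<rho> E x y)"
  by (rule linearI) (simp_all add: game_payoff_def sum.distrib algebra_simps sum_distrib_left sc_mat sc_c del: vector_scaleR_component)

lemma lin_gp2: "linear (\<lambda>y. game_payoff R \<rho> E x y)"
  by (rule linearI) (simp_all add: game_payoff_def sum.distrib algebra_simps sum_distrib_left sc_mat sc_c del: vector_scaleR_component)

lemma lin_Re: "linear f \<Longrightarrow> linear (\<lambda>x. Re (f x))"
  using linear_compose[of f Re] bounded_linear_Re bounded_linear.linear by (auto simp: o_def)

theorem theorem2:
  fixes q :: nat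
    and \<rho> :: "complex^('n::finite \<times> 'n)^('n \<times> 'n)"
    and M :: "'o::finite \<Rightarrow> complex^('n \<times> 'n)^('n \<times> 'n)"
    and aI aII :: "'o \<Rightarrow> real"
    and E :: "'b::finite \<Rightarrow> complex^'n^'n"
  defines "\<Omega> \<equiv> strategies E"
    and "P \<equiv> (\<lambda>x y. Re (game_payoff (payoff_op aI M) \<rho> E x y))"
  assumes n_qubits: "CARD('n) = 2 ^ q"
    and rho: "density_matrix \<rho>"
    and meas: "povm M"
    and zero_sum: "\<forall>m. aI m = - aII m"
    and basis: "matrix_basis E"
  shows "(\<forall>x\<in>\<Omega>. \<exists>y\<in>\<Omega>. \<forall>y'\<in>\<Omega>. P x y \<le> P x y')
       \<and> (\<forall>y\<in>\<Omega>. \<exists>x\<in>\<Omega>. \<forall>x'\<in>\<Omega>. P x' y \<le> P x y)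
       \<and> (\<exists>x0\<in>\<Omega>. \<forall>x\<in>\<Omega>. (INF y\<in>\<Omega>. P x y) \<le> (INF y\<in>\<Omega>. P x0 y))
       \<and> (\<exists>y0\<in>\<Omega>. \<forall>y\<in>\<Omega>. (SUP x\<in>\<Omega>. P x y0) \<le> (SUP x\<in>\<Omega>. P x y))
       \<and> (SUP x\<in>\<Omega>. INF y\<in>\<Omega>. P x y) = (INF y\<in>\<Omega>. SUP x\<in>\<Omega>. P x y)"
proof -
  have cpt: "compact \<Omega>" unfolding \<Omega>_def compact_eq_bounded_closed
    using bounded_strategies[OF basis] closed_strategies by blast
  have cvx: "convex \<Omega>" unfolding \<Omega>_def by (rule convex_strategies)
  have ne: "\<Omega> \<noteq> {}" unfolding \<Omega>_def by (rule strategies_nonempty[OF basis])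
  have l1: "linear (\<lambda>x. P x y)" for y unfolding P_def by (intro lin_Re lin_gp1)
  have l2: "linear (\<lambda>y. P x y)" for x unfolding P_def by (intro lin_Re lin_gp2)
  have c1: "continuous_on \<Omega> (\<lambda>x. P x y)" for y
    by (rule continuous_on_subset[OF cont_lin[OF l1] subset_UNIV])
  have c2: "continuous_on \<Omega> (\<lambda>y. P x y)" for x
    by (rule continuous_on_subset[OF cont_lin[OF l2] subset_UNIV])
  obtain x0 y0 where x0: "x0 \<in> \<Omega>" and y0: "y0 \<in> \<Omega>"
    and sx: "\<And>x. x \<in> \<Omega> \<Longrightarrow> P x y0 \<le> P x0 y0" and sy: "\<And>y. y \<in> \<Omega> \<Longrightarrow> P x0 y0 \<le> P x0 y"
    using saddle_point[OF cpt cvx ne l1 l2] by blast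
  have A1: "\<exists>y\<in>\<Omega>. \<forall>y'\<in>\<Omega>. P x y \<le> P x y'" for x
    using continuous_attains_inf[OF cpt ne c2] by blast
  have A2: "\<exists>x\<in>\<Omega>. \<forall>x'\<in>\<Omega>. P x' y \<le> P x y" for y
    using continuous_attains_sup[OF cpt ne c1] by blast
  have infle: "(INF y\<in>\<Omega>. P x y) \<le> P x0 y0" if "x \<in> \<Omega>" for x
  proof -
    obtain ym where ym: "ym \<in> \<Omega>" "\<forall>y'\<in>\<Omega>. P x ym \<le> P x y'" using A1 by blast
    have "(INF y\<in>\<Omega>. P x y) = P x ym" using ym by (intro cInf_eq_minimum) auto
    also have "\<dots> \<le> P x y0" using ym y0 by auto
    also have "\<dots> \<le> P x0 y0" using sx that by auto
    finally show ?thesis .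
  qed
  have supge: "P x0 y0 \<le> (SUP x\<in>\<Omega>. P x y)" if "y \<in> \<Omega>" for y
  proof -
    obtain xm where xm: "xm \<in> \<Omega>" "\<forall>x'\<in>\<Omega>. P x' y \<le> P xm y" using A2 by blast
    have "P x0 y0 \<le> P x0 y" using sy that by auto
    also have "\<dots> \<le> P xm y" using xm x0 by auto
    also have "\<dots> = (SUP x\<in>\<Omega>. P x y)" using xm by (intro cSup_eq_maximum[symmetric]) auto
    finally show ?thesis .
  qed
  have inf0: "(INF y\<in>\<Omega>. P x0 y) = P x0 y0" using y0 sy by (intro cInf_eq_minimum) auto
  have sup0: "(SUP x\<in>\<Omega>. P x y0) = P x0 y0" using x0 sx by (intro cSup_eq_maximum) auto
  have C3: "\<exists>x0\<in>\<Omega>. \<forall>x\<in>\<Omega>. (INF y\<in>\<Omega>. P x y) \<le> (INF y\<in>\<Omega>. P x0 y)"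
  proof (rule bexI[OF _ x0])
    show "\<forall>x\<in>\<Omega>. (INF y\<in>\<Omega>. P x y) \<le> (INF y\<in>\<Omega>. P x0 y)"
      unfolding inf0 using infle by blast
  qed
  have C4: "\<exists>y0\<in>\<Omega>. \<forall>y\<in>\<Omega>. (SUP x\<in>\<Omega>. P x y0) \<le> (SUP x\<in>\<Omega>. P x y)"
  proof (rule bexI[OF _ y0])
    show "\<forall>y\<in>\<Omega>. (SUP x\<in>\<Omega>. P x y0) \<le> (SUP x\<in>\<Omega>. P x y)"
      unfolding sup0 using supge by blast
  qed
  have e1: "(SUP x\<in>\<Omega>. INF y\<in>\<Omega>. P x y) = P x0 y0"
  proof (rule cSup_eq_maximum)
    show "P x0 y0 \<in> (\<lambda>x. INF y\<in>\<Omega>. P x y) ` \<Omega>"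
    proof (rule image_eqI[where x=x0])
      show "P x0 y0 = (INF y\<in>\<Omega>. P x0 y)" using inf0 by simp
    qed (rule x0)
    show "z \<le> P x0 y0" if "z \<in> (\<lambda>x. INF y\<in>\<Omega>. P x y) ` \<Omega>" for z
      using that infle by blast
  qed
  have e2: "(INF y\<in>\<Omega>. SUP x\<in>\<Omega>. P x y) = P x0 y0"
  proof (rule cInf_eq_minimum)
    show "P x0 y0 \<in> (\<lambda>y. SUP x\<in>\<Omega>. P x y) ` \<Omega>"
    proof (rule image_eqI[where x=y0])
      show "P x0 y0 = (SUP x\<in>\<Omega>. P x y0)" using sup0 by simp
    qed (rule y0)
    show "P x0 y0 \<le> z" if "z \<in> (\<lambda>y. SUP x\<in>\<Omega>. P x y) ` \<Omega>" for z
      using that supge by blast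
  qed
  have C5: "(SUP x\<in>\<Omega>. INF y\<in>\<Omega>. P x y) = (INF y\<in>\<Omega>. SUP x\<in>\<Omega>. P x y)"
    unfolding e1 e2 ..
  have C1: "\<forall>x\<in>\<Omega>. \<exists>y\<in>\<Omega>. \<forall>y'\<in>\<Omega>. P x y \<le> P x y'" using A1 by blast
  have C2: "\<forall>y\<in>\<Omega>. \<exists>x\<in>\<Omega>. \<forall>x'\<in>\<Omega>. P x' y \<le> P x y" using A2 by blast
  show ?thesis using C1 C2 C3 C4 C5 by (intro conjI)
qed

end
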